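(* Let $d\ge 2$ and let $C,C_1,C_2,\ldots$ be $d$-dimensional copulas. If $C_n \xrightarrow{\text{wcc}} C$, then for every $J\subseteq\{1,\dots,d-1\}$ with $1\le |J|\le d-1$ we have $(C_n)_{J\cup\{d\}} \xrightarrow{\text{wcc}} C_{J\cup\{d\}}$.
   Context: $\mathbb{I}=[0,1]$, $\lambda$ denotes Lebesgue measure. For a $k$-dimensional copula $A$ ($k\ge 2$), its Markov kernel $K_A:\mathbb{I}\times\mathcal{B}(\mathbb{I}^{k-1})\to\mathbb{I}$ is (a version of) the regular conditional distribution of $(U_1,\dots,U_{k-1})$ given $U_k=v$, where $(U_1,\dots,U_k)\sim A$; equivalently $A(\mathbf{u},v)=\int_{[0,v]}K_A(t,[\mathbf{0},\mathbf{u}])\,d\lambda(t)$. A sequence of $k$-dimensional copulas $(A_n)$ converges weakly conditional to $A$, written $A_n\xrightarrow{\text{wcc}}A$, if for $\lambda$-almost every $v\in\mathbb{I}$ the probability measures $K_{A_n}(v,\cdot)$ converge weakly to $K_A(v,\cdot)$ on $\mathcal{B}(\mathbb{I}^{k-1})$. For $J'=\{j_1<\dots<j_m\}\subseteq\{1,\dots,d\}$ with $m\ge2$, $C_{J'}$ denotes the marginal copula of $C$ in the coordinates $j_1,\dots,j_m$ (in this order), so that in $C_{J\cup\{d\}}$ the last coordinate is coordinate $d$ of $C$. *)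

theory Defs
  imports "HOL-Probability.Probability"
begin

text \<open>Points of the unit cube are functions nat => real; a k-dimensional object uses
  the coordinates 1..k. The unit cube I^k as a subset:\<close>

definition unit_cube :: "nat \<Rightarrow> (nat \<Rightarrow> real) set" where
  "unit_cube k = {x. \<forall>i\<in>{1..k}. 0 \<le> x i \<and> x i \<le> 1}"

definition is_copula :: "nat \<Rightarrow> ((nat \<Rightarrow> real) \<Rightarrow> real) \<Rightarrow> bool" where
  "is_copula k C \<longleftrightarrow> 2 \<le> k
    \<and> (\<forall>x y. (\<forall>i\<in>{1..k}. x i = y i) \<longrightarrow> C x = C y)
    \<and> (\<forall>x\<in>unit_cube k. (\<exists>i\<in>{1..k}. x i = 0) \<longrightarrow> C x = 0)
    \<and> (\<forall>x\<in>unit_cube k. \<forall>i\<in>{1..k}. (\<forall>j\<in>{1..k} - {i}. x j = 1) \<longrightarrow> C x = x i)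
    \<and> (\<forall>a\<in>unit_cube k. \<forall>b\<in>unit_cube k. (\<forall>i\<in>{1..k}. a i \<le> b i) \<longrightarrow>
         0 \<le> (\<Sum>S\<in>Pow {1..k}. (-1::real) ^ card ({1..k} - S) *
                 C (\<lambda>i. if i \<in> S then b i else a i)))"

text \<open>Marginal copula C_{J'}: the coordinates j_1 < ... < j_m of J' become coordinates
  1..m (in this order); all other coordinates of C are set to 1.\<close>

definition marg :: "((nat \<Rightarrow> real) \<Rightarrow> real) \<Rightarrow> nat set \<Rightarrow> (nat \<Rightarrow> real) \<Rightarrow> real" where
  "marg C J' u = C (\<lambda>i. if i \<in> J' then u (card {j\<in>J'. j \<le> i}) else 1)"

definition cube :: "nat \<Rightarrow> (nat \<Rightarrow> real) measure" where
  "cube m = PiM {1..m} (\<lambda>_. restrict_space borel {0..1::real})"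

text \<open>K is (a version of) the Markov kernel of the k-dimensional copula A:
  a measurable map t |-> K t from I into probability measures on I^(k-1) with
  A(u,v) = integral over [0,v] of K(t,[0,u]).\<close>

definition is_markov_kernel ::
  "nat \<Rightarrow> ((nat \<Rightarrow> real) \<Rightarrow> real) \<Rightarrow> (real \<Rightarrow> (nat \<Rightarrow> real) measure) \<Rightarrow> bool" where
  "is_markov_kernel k A K \<longleftrightarrow>
     K \<in> measurable (restrict_space lborel {0..1}) (prob_algebra (cube (k - 1)))
     \<and> (\<forall>u\<in>space (cube (k - 1)). \<forall>v\<in>{0..1}.
          A (u(k := v)) =
          (LINT t:{0..v}|lborel. measure (K t) {x \<in> space (cube (k - 1)). \<forall>i\<in>{1..k-1}. x i \<le> u i}))"

definition weak_conv_cube :: "nat \<Rightarrow> (nat \<Rightarrow> (nat \<Rightarrow> real) measure) \<Rightarrow> (nat \<Rightarrow> real) measure \<Rightarrow> bool" where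
  "weak_conv_cube m Mn M \<longleftrightarrow>
     (\<forall>f :: (nat \<Rightarrow> real) \<Rightarrow> real.
        continuous_on (space (cube m)) f \<and> (\<exists>B. \<forall>x\<in>space (cube m). \<bar>f x\<bar> \<le> B) \<longrightarrow>
        (\<lambda>n. integral\<^sup>L (Mn n) f) \<longlonglongrightarrow> integral\<^sup>L M f)"

definition wcc :: "nat \<Rightarrow> (nat \<Rightarrow> (nat \<Rightarrow> real) \<Rightarrow> real) \<Rightarrow> ((nat \<Rightarrow> real) \<Rightarrow> real) \<Rightarrow> bool" where
  "wcc k An A \<longleftrightarrow>
     (\<exists>Kn K. (\<forall>n. is_markov_kernel k (An n) (Kn n)) \<and> is_markov_kernel k A K
        \<and> (AE v in lborel. v \<in> {0..1} \<longrightarrow> weak_conv_cube (k - 1) (\<lambda>n. Kn n v) (K v)))"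

end

theory Submission imports Defs begin

definition rk :: "nat set \<Rightarrow> nat \<Rightarrow> nat" where
  "rk J i = card {j\<in>J. j \<le> i}"

definition ek :: "nat set \<Rightarrow> nat \<Rightarrow> nat" where
  "ek J = the_inv_into J (rk J)"

definition proj :: "nat set \<Rightarrow> (nat \<Rightarrow> real) \<Rightarrow> (nat \<Rightarrow> real)" where
  "proj J x = restrict (\<lambda>i. x (ek J i)) {1..card J}"

lemma rk_bij:
  assumes "finite J"
  shows "bij_betw (rk J) J {1..card J}"
proof -
  have mono: "rk J i < rk J i'" if "i \<in> J" "i' \<in> J" "i < i'" for i i'
  proof -
    have "i' \<notin> {j\<in>J. j \<le> i}" "i' \<in> {j\<in>J. j \<le> i'}" using that by auto
    moreover have "{j\<in>J. j \<le> i} \<subseteq> {j\<in>J. j \<le> i'}" using that by auto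
    ultimately have "{j\<in>J. j \<le> i} \<subset> {j\<in>J. j \<le> i'}" by blast
    then show ?thesis unfolding rk_def by (rule psubset_card_mono[rotated]) (use assms in auto)
  qed
  have inj: "inj_on (rk J) J"
  proof (rule inj_onI)
    fix x y assume "x \<in> J" "y \<in> J" "rk J x = rk J y"
    then show "x = y" using mono[of x y] mono[of y x] by (metis less_irrefl linorder_neqE_nat)
  qed
  have sub: "rk J ` J \<subseteq> {1..card J}"
  proof
    fix y assume "y \<in> rk J ` J"
    then obtain i where i: "i \<in> J" "y = rk J i" by auto
    have "{j\<in>J. j \<le> i} \<noteq> {}" using i by auto
    moreover have "finite {j\<in>J. j \<le> i}" using assms by auto
    ultimately have "1 \<le> y" using i unfolding rk_def by (simp add: Suc_leI card_gt_0_iff)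
    moreover have "y \<le> card J" using i assms unfolding rk_def by (simp add: card_mono)
    ultimately show "y \<in> {1..card J}" by auto
  qed
  have "card (rk J ` J) = card {1..card J}" using card_image[OF inj] by simp
  then have "rk J ` J = {1..card J}" using sub by (intro card_subset_eq) auto
  then show ?thesis using inj by (simp add: bij_betw_def)
qed

lemma ek_bij: "finite J \<Longrightarrow> bij_betw (ek J) {1..card J} J"
  unfolding ek_def by (rule bij_betw_the_inv_into[OF rk_bij])

lemma ek_in: "finite J \<Longrightarrow> i \<in> {1..card J} \<Longrightarrow> ek J i \<in> J"
  using ek_bij bij_betwE by blast

lemma rk_ek: "finite J \<Longrightarrow> i \<in> {1..card J} \<Longrightarrow> rk J (ek J i) = i"
  unfolding ek_def using rk_bij by (metis bij_betw_def f_the_inv_into_f)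

lemma ek_rk: "finite J \<Longrightarrow> i \<in> J \<Longrightarrow> ek J (rk J i) = i"
  unfolding ek_def using rk_bij by (metis bij_betw_def the_inv_into_f_f)

lemma space_cube: "space (cube m) = PiE {1..m} (\<lambda>_. {0..1::real})"
  unfolding cube_def by (simp add: space_PiM space_restrict_space)

lemma comp_meas[measurable]: assumes i: "i \<in> {1..m}" shows "(\<lambda>x. x i) \<in> borel_measurable (cube m)"
proof -
  have "(\<lambda>x. x i) \<in> (\<Pi>\<^sub>M i\<in>{1..m}. restrict_space borel {0..1::real}) \<rightarrow>\<^sub>M restrict_space borel {0..1}"
    using i by (rule measurable_component_singleton)
  moreover have "(\<lambda>x::real. x) \<in> restrict_space borel {0..1} \<rightarrow>\<^sub>M borel"
    by (rule measurable_restrict_space1) simp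
  ultimately show ?thesis unfolding cube_def using measurable_compose by fastforce
qed

lemma sets_cube_in: "{y \<in> space (cube m). \<forall>i\<in>{1..m}. y i \<le> u i} \<in> sets (cube m)"
  by measurable

lemma proj_meas:
  assumes "finite J" "J \<subseteq> {1..n}"
  shows "proj J \<in> cube n \<rightarrow>\<^sub>M cube (card J)"
  unfolding proj_def[abs_def] cube_def
proof (rule measurable_restrict)
  fix i assume "i \<in> {1..card J}"
  then have "ek J i \<in> {1..n}" using ek_in assms by blast
  then show "(\<lambda>x. x (ek J i)) \<in> (\<Pi>\<^sub>M i\<in>{1..n}. restrict_space borel {0..1}) \<rightarrow>\<^sub>M restrict_space borel {0..1}"
    by (rule measurable_component_singleton)
qed

lemma proj_space:
  assumes "finite J" "J \<subseteq> {1..n}" "x \<in> space (cube n)"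
  shows "proj J x \<in> space (cube (card J))"
  using measurable_space[OF proj_meas[OF assms(1,2)] assms(3)] .

lemma proj_cont: "continuous_on S (proj J)"
  unfolding proj_def[abs_def]
proof (intro continuous_on_coordinatewise_then_product)
  fix i show "continuous_on S (\<lambda>x. restrict (\<lambda>i. x (ek J i)) {1..card J} i)"
  proof (cases "i \<in> {1..card J}")
    case True then show ?thesis
      by (simp add: continuous_on_subset[OF continuous_on_product_coordinates])
  next
    case False then have eq: "(\<lambda>x. restrict (\<lambda>i. x (ek J i)) {1..card J} i) = (\<lambda>x. undefined)"
      by (auto simp: restrict_def)
    show ?thesis unfolding eq by (rule continuous_on_const)
  qed
qed

lemma weak_proj:
  assumes fin: "finite J" and Jsub: "J \<subseteq> {1..n}" and sMn: "\<forall>k. sets (Mn k) = sets (cube n)"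
    and sM: "sets M = sets (cube n)" and wc: "weak_conv_cube n Mn M"
  shows "weak_conv_cube (card J) (\<lambda>k. distr (Mn k) (cube (card J)) (proj J)) (distr M (cube (card J)) (proj J))"
  unfolding weak_conv_cube_def
proof (intro allI impI)
  fix f :: "(nat \<Rightarrow> real) \<Rightarrow> real"
  assume "continuous_on (space (cube (card J))) f \<and> (\<exists>B. \<forall>x\<in>space (cube (card J)). \<bar>f x\<bar> \<le> B)"
  then obtain B where cont: "continuous_on (space (cube (card J))) f"
    and bd: "\<forall>x\<in>space (cube (card J)). \<bar>f x\<bar> \<le> B" by blast
  have pm: "proj J \<in> cube n \<rightarrow>\<^sub>M cube (card J)" using proj_meas[OF fin Jsub] .
  have pmk: "proj J \<in> Mn k \<rightarrow>\<^sub>M cube (card J)" for k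
    using pm sMn by (simp cong: measurable_cong_sets)
  have pmM: "proj J \<in> M \<rightarrow>\<^sub>M cube (card J)"
    using pm sM by (simp cong: measurable_cong_sets)
  show "(\<lambda>k. integral\<^sup>L (distr (Mn k) (cube (card J)) (proj J)) f) \<longlonglongrightarrow> integral\<^sup>L (distr M (cube (card J)) (proj J)) f"
  proof (cases "f \<in> borel_measurable (cube (card J))")
    case True
    have c2: "continuous_on (space (cube n)) (\<lambda>x. f (proj J x))"
      by (rule continuous_on_compose2[OF cont proj_cont]) (use proj_space[OF fin Jsub] in auto)
    have b2: "\<exists>B. \<forall>x\<in>space (cube n). \<bar>f (proj J x)\<bar> \<le> B"
      using bd proj_space[OF fin Jsub] by blast
    have "(\<lambda>k. integral\<^sup>L (Mn k) (\<lambda>x. f (proj J x))) \<longlonglongrightarrow> integral\<^sup>L M (\<lambda>x. f (proj J x))"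
      using wc c2 b2 unfolding weak_conv_cube_def by blast
    then show ?thesis
      by (simp add: integral_distr[OF pmk True] integral_distr[OF pmM True])
  next
    case False
    have "\<not> integrable (distr N (cube (card J)) (proj J)) f" for N
      using False borel_measurable_integrable by (metis measurable_cong_sets sets_distr)
    then show ?thesis by (simp add: not_integrable_integral_eq)
  qed
qed

lemma markov_marg:
  assumes d: "d \<ge> 2" and cop: "is_copula d A" and mk: "is_markov_kernel d A K"
    and Jsub: "J \<subseteq> {1..d-1}"
  shows "is_markov_kernel (card J + 1) (marg A (J \<union> {d}))
           (\<lambda>t. distr (K t) (cube (card J)) (proj J))"
proof -
  have fin: "finite J" using Jsub finite_subset by blast
  define m where "m = card J"
  have Kmeas: "K \<in> restrict_space lborel {0..1} \<rightarrow>\<^sub>M prob_algebra (cube (d - 1))"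
    and rep: "\<forall>u\<in>space (cube (d - 1)). \<forall>v\<in>{0..1}. A (u(d := v)) =
          (LINT t:{0..v}|lborel. measure (K t) {x \<in> space (cube (d - 1)). \<forall>i\<in>{1..d-1}. x i \<le> u i})"
    using mk unfolding is_markov_kernel_def by auto
  have pm: "proj J \<in> cube (d-1) \<rightarrow>\<^sub>M cube m" using proj_meas[OF fin Jsub] m_def by simp
  have coord: "\<forall>x y. (\<forall>i\<in>{1..d}. x i = y i) \<longrightarrow> A x = A y"
    using cop unfolding is_copula_def by blast
  have dJ: "d \<notin> J" using Jsub d by auto
  have meas: "(\<lambda>t. distr (K t) (cube m) (proj J)) \<in> restrict_space lborel {0..1} \<rightarrow>\<^sub>M prob_algebra (cube m)"
    by (rule measurable_compose[OF Kmeas measurable_distr_prob_space[OF pm]])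
  have main: "marg A (J \<union> {d}) (u(m + 1 := v)) =
      (LINT t:{0..v}|lborel. measure (distr (K t) (cube m) (proj J)) {x \<in> space (cube m). \<forall>i\<in>{1..m}. x i \<le> u i})"
    if u: "u \<in> space (cube m)" and v: "v \<in> {0..1}" for u v
  proof -
    define w where "w = restrict (\<lambda>i. if i \<in> J then u (rk J i) else 1) {1..d-1}"
    have rkin: "rk J i \<in> {1..m}" if "i \<in> J" for i
      using rk_bij[OF fin] that m_def bij_betwE by blast
    have u01: "u i \<in> {0..1}" if "i \<in> {1..m}" for i
      using u that unfolding space_cube by auto
    have w: "w \<in> space (cube (d-1))"
      unfolding space_cube w_def using rkin u01 by auto
    have eq1: "marg A (J \<union> {d}) (u(m + 1 := v)) = A (w(d := v))"
      unfolding marg_def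
    proof (rule coord[rule_format])
      fix i assume i: "i \<in> {1..d}"
      show "(if i \<in> J \<union> {d} then (u(m + 1 := v)) (card {j \<in> J \<union> {d}. j \<le> i}) else 1) = (w(d := v)) i"
      proof (cases "i = d")
        case True
        have "\<forall>x\<in>J. x \<le> d" using Jsub by (force simp: subset_iff)
        then have "{j \<in> J \<union> {d}. j \<le> i} = insert d J" using True by auto
        then have "card {j \<in> J \<union> {d}. j \<le> i} = m + 1" using fin dJ m_def by simp
        then show ?thesis using True by simp
      next
        case False
        then have i': "i \<in> {1..d-1}" using i by auto
        show ?thesis
        proof (cases "i \<in> J")
          case True
          have "{j \<in> J \<union> {d}. j \<le> i} = {j \<in> J. j \<le> i}" using False i by auto
          then have "card {j \<in> J \<union> {d}. j \<le> i} = rk J i" unfolding rk_def by simp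
          then show ?thesis using True False i' rkin[OF True] unfolding w_def by auto
        next
          case False2: False
          then show ?thesis using False i' unfolding w_def by auto
        qed
      qed
    qed
    also have "\<dots> = (LINT t:{0..v}|lborel. measure (K t) {x \<in> space (cube (d - 1)). \<forall>i\<in>{1..d-1}. x i \<le> w i})"
      using rep w v by blast
    also have "\<dots> = (LINT t:{0..v}|lborel. measure (distr (K t) (cube m) (proj J)) {x \<in> space (cube m). \<forall>i\<in>{1..m}. x i \<le> u i})"
    proof (rule set_lebesgue_integral_cong)
      show "{0..v} \<in> sets lborel" by simp
      show "\<forall>t. t \<in> {0..v} \<longrightarrow> measure (K t) {x \<in> space (cube (d - 1)). \<forall>i\<in>{1..d - 1}. x i \<le> w i} =
          measure (distr (K t) (cube m) (proj J)) {x \<in> space (cube m). \<forall>i\<in>{1..m}. x i \<le> u i}"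
      proof (intro allI impI)
        fix t assume t: "t \<in> {0..v}"
        then have "t \<in> space (restrict_space lborel {0..1})" using v by (simp add: space_restrict_space)
        then have "K t \<in> space (prob_algebra (cube (d - 1)))" using measurable_space[OF Kmeas] by blast
        then have sK: "sets (K t) = sets (cube (d-1))" by (simp add: space_prob_algebra)
        then have spK: "space (K t) = space (cube (d-1))" by (rule sets_eq_imp_space_eq)
        have pmK: "proj J \<in> K t \<rightarrow>\<^sub>M cube m" using pm sK by (simp cong: measurable_cong_sets)
        have "measure (distr (K t) (cube m) (proj J)) {x \<in> space (cube m). \<forall>i\<in>{1..m}. x i \<le> u i}
           = measure (K t) (proj J -` {x \<in> space (cube m). \<forall>i\<in>{1..m}. x i \<le> u i} \<inter> space (K t))"
          by (rule measure_distr[OF pmK sets_cube_in])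
        also have "proj J -` {x \<in> space (cube m). \<forall>i\<in>{1..m}. x i \<le> u i} \<inter> space (K t)
            = {x \<in> space (cube (d - 1)). \<forall>i\<in>{1..d - 1}. x i \<le> w i}"
        proof (intro set_eqI iffI)
          fix x assume x: "x \<in> proj J -` {x \<in> space (cube m). \<forall>i\<in>{1..m}. x i \<le> u i} \<inter> space (K t)"
          then have xs: "x \<in> space (cube (d-1))" using spK by auto
          have le: "x (ek J i) \<le> u i" if "i \<in> {1..m}" for i
            using x that unfolding proj_def m_def by auto
          have "x i \<le> w i" if "i \<in> {1..d-1}" for i
          proof (cases "i \<in> J")
            case True
            then show ?thesis using le[OF rkin[OF True]] ek_rk[OF fin True] that unfolding w_def by auto
          next
            case False
            then show ?thesis using xs that unfolding w_def space_cube by auto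
          qed
          then show "x \<in> {x \<in> space (cube (d - 1)). \<forall>i\<in>{1..d - 1}. x i \<le> w i}" using xs by auto
        next
          fix x assume x: "x \<in> {x \<in> space (cube (d - 1)). \<forall>i\<in>{1..d - 1}. x i \<le> w i}"
          have ps: "proj J x \<in> space (cube m)" using proj_space[OF fin Jsub] x m_def by auto
          have "proj J x i \<le> u i" if "i \<in> {1..m}" for i
          proof -
            have e: "ek J i \<in> J" using ek_in[OF fin] that m_def by auto
            then have "ek J i \<in> {1..d-1}" using Jsub by auto
            then have "x (ek J i) \<le> w (ek J i)" using x by auto
            also have "\<dots> = u i" using e \<open>ek J i \<in> {1..d-1}\<close> rk_ek[OF fin] that m_def unfolding w_def by auto
            finally show ?thesis using that unfolding proj_def m_def by auto
          qed
          then show "x \<in> proj J -` {x \<in> space (cube m). \<forall>i\<in>{1..m}. x i \<le> u i} \<inter> space (K t)"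
            using ps x spK by auto
        qed
        finally show "measure (K t) {x \<in> space (cube (d - 1)). \<forall>i\<in>{1..d - 1}. x i \<le> w i} =
          measure (distr (K t) (cube m) (proj J)) {x \<in> space (cube m). \<forall>i\<in>{1..m}. x i \<le> u i}" by simp
      qed
    qed
    finally show ?thesis .
  qed
  show ?thesis
    unfolding is_markov_kernel_def using meas main m_def by simp
qed

theorem theorem2p2:
  fixes d :: nat and C :: "(nat \<Rightarrow> real) \<Rightarrow> real"
    and Cn :: "nat \<Rightarrow> (nat \<Rightarrow> real) \<Rightarrow> real" and J :: "nat set"
  assumes "d \<ge> 2"
    and "is_copula d C" and "\<forall>n. is_copula d (Cn n)"
    and "wcc d Cn C"
    and "J \<subseteq> {1..d-1}" and "1 \<le> card J" and "card J \<le> d - 1"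
  shows "wcc (card J + 1) (\<lambda>n. marg (Cn n) (J \<union> {d})) (marg C (J \<union> {d}))"
proof -
  have fin: "finite J" using assms(5) finite_subset by blast
  obtain Kn K where Kn: "\<forall>n. is_markov_kernel d (Cn n) (Kn n)" and K: "is_markov_kernel d C K"
    and ae: "AE v in lborel. v \<in> {0..1} \<longrightarrow> weak_conv_cube (d - 1) (\<lambda>n. Kn n v) (K v)"
    using assms(4) unfolding wcc_def by blast
  have sp: "sets (L v) = sets (cube (d-1))" if "is_markov_kernel d B L" "v \<in> {0..1}" for B L v
  proof -
    have "L \<in> restrict_space lborel {0..1} \<rightarrow>\<^sub>M prob_algebra (cube (d - 1))"
      using that unfolding is_markov_kernel_def by blast
    moreover have "v \<in> space (restrict_space lborel {0..1})" using that by (simp add: space_restrict_space)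
    ultimately have "L v \<in> space (prob_algebra (cube (d - 1)))" by (rule measurable_space)
    then show ?thesis by (simp add: space_prob_algebra)
  qed
  show ?thesis
    unfolding wcc_def
  proof (intro exI conjI allI)
    fix n show "is_markov_kernel (card J + 1) (marg (Cn n) (J \<union> {d})) (\<lambda>t. distr (Kn n t) (cube (card J)) (proj J))"
      using markov_marg[OF assms(1)] assms(3,5) Kn by blast
  next
    show "is_markov_kernel (card J + 1) (marg C (J \<union> {d})) (\<lambda>t. distr (K t) (cube (card J)) (proj J))"
      using markov_marg[OF assms(1,2) K assms(5)] .
  next
    show "AE v in lborel. v \<in> {0..1} \<longrightarrow> weak_conv_cube (card J + 1 - 1)
       (\<lambda>n. distr (Kn n v) (cube (card J)) (proj J)) (distr (K v) (cube (card J)) (proj J))"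
      using ae
    proof (rule AE_mp, intro AE_I2 impI)
      fix v assume h: "v \<in> {0..1} \<longrightarrow> weak_conv_cube (d - 1) (\<lambda>n. Kn n v) (K v)" and v: "v \<in> {0..1}"
      show "weak_conv_cube (card J + 1 - 1) (\<lambda>n. distr (Kn n v) (cube (card J)) (proj J)) (distr (K v) (cube (card J)) (proj J))"
        unfolding add_diff_cancel_right'
      proof (rule weak_proj[OF fin assms(5)])
        show "\<forall>k. sets (Kn k v) = sets (cube (d - 1))" using sp[OF _ v] Kn by blast
        show "sets (K v) = sets (cube (d - 1))" using sp[OF K v] .
        show "weak_conv_cube (d - 1) (\<lambda>n. Kn n v) (K v)" using h v by blast
      qed
    qed
  qed
qed

end
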